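(* Consider the closed-loop system $$\dot X(t)=f\big(X(t),u(0,t)\big),\quad u_t(x,t)=v\big(u(x,t)\big)u_x(x,t),\quad u(1,t)=\kappa\big(p(1,t)\big),$$ with $p(x,t)=X(t)+\int_0^x f(p(y,t),u(y,t))\Gamma(u(y,t),u_y(y,t),y)\,dy$, $\Gamma(u,u_x,x)=\frac{1}{v(u)}-\frac{x v'(u)u_x}{v(u)^2}$, under Assumptions (A1)–(A3) below, let $M>0$ be fixed, and define $w(x,t)=u(x,t)-\kappa(p(x,t))$. There exists a class $\mathcal{K}_\infty$ function $\rho_2$ such that for all solutions of the closed-loop system satisfying $$-M<\frac{v'\big(u(x,t)\big)u_x(x,t)}{v\big(u(x,t)\big)}<1\quad\text{for all }x\in[0,1],\ t\ge0,$$ the following holds: $$\|p(t)\|_\infty+\|p_x(t)\|_\infty\le\rho_2\big(|X(t)|+\|w(t)\|_\infty\big)\quad\text{for all }t\ge0.$$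
   Context: $X(t)\in\mathbb{R}^n$, $u(x,t)\in\mathbb{R}$, $x\in[0,1]$, $t\ge0$; $f:\mathbb{R}^n\times\mathbb{R}\to\mathbb{R}^n$ is continuously differentiable with $f(0,0)=0$. (A1) $v:\mathbb{R}\to\mathbb{R}_+$ is twice continuously differentiable and $v(u)\ge\underline v>0$ for all $u$. (A2) $\dot X=f(X,\omega)$ is strongly forward complete w.r.t. $\omega$: there exist smooth $R:\mathbb{R}^n\to\mathbb{R}_+$ and class $\mathcal{K}_\infty$ functions $\alpha_1,\alpha_2,\alpha_3$ with $\alpha_1(|X|)\le R(X)\le\alpha_2(|X|)$, $\frac{\partial R}{\partial X}f(X,\omega)\le R(X)+\alpha_3(|\omega|)$. (A3) $\kappa:\mathbb{R}^n\to\mathbb{R}$ is twice continuously differentiable, $\kappa(0)=0$, and $\dot X=f(X,\kappa(X)+\omega)$ is input-to-state stable w.r.t. $\omega$. Solutions are continuously differentiable functions $X$, $u$ satisfying the closed-loop equations. For vector-valued $p$, $\|p(t)\|_\infty=\max_{x\in[0,1]}|p(x,t)|$, $\|p_x(t)\|_\infty=\max_{x\in[0,1]}|p_x(x,t)|$ ($|\cdot|$ Euclidean); $\|w(t)\|_\infty=\max_{x\in[0,1]}|w(x,t)|$. *)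

theory Defs
  imports "HOL-Analysis.Analysis"
begin

definition class_K :: "(real \<Rightarrow> real) \<Rightarrow> bool" where
  "class_K \<alpha> \<longleftrightarrow> continuous_on {0..} \<alpha> \<and> \<alpha> 0 = 0 \<and> strict_mono_on {0..} \<alpha>"

definition class_K_inf :: "(real \<Rightarrow> real) \<Rightarrow> bool" where
  "class_K_inf \<alpha> \<longleftrightarrow> class_K \<alpha> \<and> filterlim \<alpha> at_top at_top"

definition class_KL :: "(real \<Rightarrow> real \<Rightarrow> real) \<Rightarrow> bool" where
  "class_KL \<beta> \<longleftrightarrow>
     (\<forall>t\<ge>0. class_K (\<lambda>s. \<beta> s t)) \<and>
     (\<forall>s\<ge>0. antimono_on {0..} (\<beta> s) \<and> ((\<beta> s) \<longlongrightarrow> 0) at_top)"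

text \<open>Smooth (C-infinity) real-valued functions: differentiable everywhere, and every
  directional derivative is again smooth (greatest fixed point).\<close>

coinductive smooth_fun :: "('a::euclidean_space \<Rightarrow> real) \<Rightarrow> bool" where
  "(\<forall>x. g differentiable (at x)) \<Longrightarrow>
   (\<forall>d. smooth_fun (\<lambda>x. frechet_derivative g (at x) d)) \<Longrightarrow> smooth_fun g"

definition strongly_forward_complete :: "('a::euclidean_space \<Rightarrow> real \<Rightarrow> 'a) \<Rightarrow> bool" where
  "strongly_forward_complete f \<longleftrightarrow>
     (\<exists>R \<alpha>1 \<alpha>2 \<alpha>3. smooth_fun R \<and> (\<forall>X. R X \<ge> 0) \<and>
        class_K_inf \<alpha>1 \<and> class_K_inf \<alpha>2 \<and> class_K_inf \<alpha>3 \<and>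
        (\<forall>X. \<alpha>1 (norm X) \<le> R X \<and> R X \<le> \<alpha>2 (norm X)) \<and>
        (\<forall>X \<omega>. frechet_derivative R (at X) (f X \<omega>) \<le> R X + \<alpha>3 \<bar>\<omega>\<bar>))"

text \<open>(A3): input-to-state stability of dX/dt = F(X,omega) w.r.t. omega
  (inputs: continuous functions on [0,oo); solutions: classical).  ISS includes
  existence of solutions on [0,oo) for every initial state and input.\<close>

definition ode_solution :: "('a::euclidean_space \<Rightarrow> real \<Rightarrow> 'a) \<Rightarrow> (real \<Rightarrow> real) \<Rightarrow> (real \<Rightarrow> 'a) \<Rightarrow> bool" where
  "ode_solution F \<omega> X \<longleftrightarrow>
     (\<forall>t\<ge>0. (X has_vector_derivative F (X t) (\<omega> t)) (at t within {0..}))"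

definition ISS :: "('a::euclidean_space \<Rightarrow> real \<Rightarrow> 'a) \<Rightarrow> bool" where
  "ISS F \<longleftrightarrow>
     (\<forall>x0 \<omega>. continuous_on {0..} \<omega> \<longrightarrow> (\<exists>X. ode_solution F \<omega> X \<and> X 0 = x0)) \<and>
     (\<exists>\<beta> \<gamma>. class_KL \<beta> \<and> class_K \<gamma> \<and>
        (\<forall>\<omega> X. continuous_on {0..} \<omega> \<longrightarrow> ode_solution F \<omega> X \<longrightarrow>
           (\<forall>t\<ge>0. norm (X t) \<le> \<beta> (norm (X 0)) t + \<gamma> (SUP s\<in>{0..t}. \<bar>\<omega> s\<bar>))))"

definition Gamma :: "(real \<Rightarrow> real) \<Rightarrow> (real \<Rightarrow> real) \<Rightarrow> real \<Rightarrow> real \<Rightarrow> real \<Rightarrow> real" where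
  "Gamma v v' u ux x = 1 / v u - x * v' u * ux / (v u)\<^sup>2"

definition closed_loop_solution ::
  "('a::euclidean_space \<Rightarrow> real \<Rightarrow> 'a) \<Rightarrow> (real \<Rightarrow> real) \<Rightarrow> (real \<Rightarrow> real) \<Rightarrow> ('a \<Rightarrow> real)
   \<Rightarrow> (real \<Rightarrow> 'a) \<Rightarrow> (real \<Rightarrow> real \<Rightarrow> real) \<Rightarrow> (real \<Rightarrow> real \<Rightarrow> real) \<Rightarrow> (real \<Rightarrow> real \<Rightarrow> real)
   \<Rightarrow> (real \<Rightarrow> real \<Rightarrow> 'a) \<Rightarrow> bool" where
  "closed_loop_solution f v v' \<kappa> X u ux ut p \<longleftrightarrow>
     (\<forall>x\<in>{0..1}. \<forall>t\<ge>0.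
        ((\<lambda>(y,s). u y s) has_derivative (\<lambda>(h,k). ux x t * h + ut x t * k))
          (at (x,t) within {0..1} \<times> {0..})) \<and>
     continuous_on ({0..1} \<times> {0..}) (\<lambda>(y,s). ux y s) \<and>
     continuous_on ({0..1} \<times> {0..}) (\<lambda>(y,s). ut y s) \<and>
     (\<forall>t\<ge>0. (X has_vector_derivative f (X t) (u 0 t)) (at t within {0..})) \<and>
     (\<forall>x\<in>{0..1}. \<forall>t\<ge>0. ut x t = v (u x t) * ux x t) \<and>
     (\<forall>t\<ge>0. u 1 t = \<kappa> (p 1 t)) \<and>
     (\<forall>t\<ge>0. continuous_on {0..1} (\<lambda>y. p y t)) \<and>
     (\<forall>x\<in>{0..1}. \<forall>t\<ge>0.
        p x t = X t + integral {0..x}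
                  (\<lambda>y. Gamma v v' (u y t) (ux y t) y *\<^sub>R f (p y t) (u y t)))"

end

theory Submission imports Defs begin

lemma hvd_Un:
  assumes "(f has_vector_derivative D) (at x within S)"
      and "(f has_vector_derivative D) (at x within T)"
  shows "(f has_vector_derivative D) (at x within S \<union> T)"
  using assms unfolding has_vector_derivative_def has_derivative_within
  by (auto intro: filterlim_sup simp only: at_within_union)

lemma inv_deriv_within:
  fixes \<sigma> \<tau> :: "real \<Rightarrow> real"
  assumes d: "(\<sigma> has_real_derivative D) (at (\<tau> s) within A)" and D: "D \<noteq> 0"
    and c: "continuous (at s within T) \<tau>" and TA: "\<And>z. z \<in> T \<Longrightarrow> \<tau> z \<in> A"
    and inv: "\<And>z. z \<in> T \<Longrightarrow> \<sigma> (\<tau> z) = z" and s: "s \<in> T"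
  shows "(\<tau> has_real_derivative inverse D) (at s within T)"
proof -
  have l1: "((\<lambda>y. (\<sigma> y - \<sigma> (\<tau> s)) / (y - \<tau> s)) \<longlongrightarrow> D) (at (\<tau> s) within A)"
    using d by (simp add: has_field_derivative_iff)
  have ne: "\<And>z. z \<in> T \<Longrightarrow> z \<noteq> s \<Longrightarrow> \<tau> z \<noteq> \<tau> s"
    using inv s by metis
  have fl: "filterlim \<tau> (at (\<tau> s) within A) (at s within T)"
    unfolding filterlim_at
  proof
    show "\<forall>\<^sub>F x in at s within T. \<tau> x \<in> A \<and> \<tau> x \<noteq> \<tau> s"
      using TA ne by (auto simp: eventually_at_filter)
    show "(\<tau> \<longlongrightarrow> \<tau> s) (at s within T)" using c by (simp add: continuous_within)
  qed
  have l2: "((\<lambda>z. (\<sigma> (\<tau> z) - \<sigma> (\<tau> s)) / (\<tau> z - \<tau> s)) \<longlongrightarrow> D) (at s within T)"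
    using filterlim_compose[OF l1 fl] by simp
  have l3: "((\<lambda>z. inverse ((\<sigma> (\<tau> z) - \<sigma> (\<tau> s)) / (\<tau> z - \<tau> s))) \<longlongrightarrow> inverse D) (at s within T)"
    using tendsto_inverse[OF l2 D] .
  have ev: "\<forall>\<^sub>F z in at s within T. inverse ((\<sigma> (\<tau> z) - \<sigma> (\<tau> s)) / (\<tau> z - \<tau> s)) = (\<tau> z - \<tau> s) / (z - s)"
    using inv s by (auto simp: eventually_at_filter)
  show ?thesis unfolding has_field_derivative_iff
    using tendsto_cong[OF ev] l3 by simp
qed


lemma slice_ISS:
  fixes P :: "real \<Rightarrow> 'a::euclidean_space" and G wf :: "real \<Rightarrow> real"
    and f :: "'a \<Rightarrow> real \<Rightarrow> 'a" and \<kappa> :: "'a \<Rightarrow> real"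
    and \<beta> :: "real \<Rightarrow> real \<Rightarrow> real" and \<gamma> :: "real \<Rightarrow> real"
  assumes Gc: "continuous_on {0..1} G" and Gp: "\<And>x. x \<in> {0..1} \<Longrightarrow> G x > 0"
    and wc: "continuous_on {0..1} wf"
    and Pd: "\<And>x. x \<in> {0..1} \<Longrightarrow> (P has_vector_derivative G x *\<^sub>R f (P x) (\<kappa> (P x) + wf x)) (at x within {0..1})"
    and ex: "\<And>x0 \<omega>. continuous_on {0..} \<omega> \<Longrightarrow> (\<exists>Y. ode_solution (\<lambda>X \<omega>. f X (\<kappa> X + \<omega>)) \<omega> Y \<and> Y 0 = x0)"
    and est: "\<And>\<omega> Y t. continuous_on {0..} \<omega> \<Longrightarrow> ode_solution (\<lambda>X \<omega>. f X (\<kappa> X + \<omega>)) \<omega> Y \<Longrightarrow> t \<ge> 0 \<Longrightarrow>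
          norm (Y t) \<le> \<beta> (norm (Y 0)) t + \<gamma> (SUP s\<in>{0..t}. \<bar>\<omega> s\<bar>)"
    and KL: "class_KL \<beta>" and Kg: "class_K \<gamma>"
  shows "\<forall>x\<in>{0..1}. norm (P x) \<le> \<beta> (norm (P 0)) 0 + \<gamma> (SUP x\<in>{0..1}. \<bar>wf x\<bar>)"
proof -
  define F where "F = (\<lambda>X \<omega>. f X (\<kappa> X + \<omega>))"
  define \<sigma> where "\<sigma> x = integral {0..x} G" for x
  have \<sigma>d: "(\<sigma> has_real_derivative G x) (at x within {0..1})" if "x \<in> {0..1}" for x
    unfolding \<sigma>_def has_real_derivative_iff_has_vector_derivative
    by (rule integral_has_vector_derivative[OF Gc that])
  have \<sigma>c: "continuous_on {0..1} \<sigma>"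
    using \<sigma>d by (meson DERIV_continuous continuous_on_eq_continuous_within)
  have \<sigma>0: "\<sigma> 0 = 0" by (simp add: \<sigma>_def)
  have \<sigma>mono: "\<sigma> a < \<sigma> b" if "0 \<le> a" "a < b" "b \<le> 1" for a b
  proof (rule DERIV_pos_imp_increasing_open[OF \<open>a < b\<close>])
    fix x assume x: "a < x" "x < b"
    have "(\<sigma> has_real_derivative G x) (at x)"
      using \<sigma>d[of x] x that at_within_interior[of x "{0..1}"] by auto
    then show "\<exists>y. (\<sigma> has_real_derivative y) (at x) \<and> 0 < y" using Gp[of x] x that by auto
  next
    show "continuous_on {a..b} \<sigma>" using \<sigma>c by (rule continuous_on_subset) (use that in auto)
  qed
  define S where "S = \<sigma> 1"
  have S0: "S \<ge> 0" using \<sigma>mono[of 0 1] \<sigma>0 by (simp add: S_def)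
  have inj: "inj_on \<sigma> {0..1}"
    by (rule inj_onI) (metis \<sigma>mono atLeastAtMost_iff linorder_neqE_linordered_idom order_less_irrefl)
  have img: "\<sigma> ` {0..1} = {0..S}"
  proof
    show "\<sigma> ` {0..1} \<subseteq> {0..S}"
    proof
      fix y assume "y \<in> \<sigma> ` {0..1}"
      then obtain x where x: "x \<in> {0..1}" "y = \<sigma> x" by auto
      have "\<sigma> 0 \<le> \<sigma> x" using \<sigma>mono[of 0 x] x by (cases "x = 0") auto
      moreover have "\<sigma> x \<le> \<sigma> 1" using \<sigma>mono[of x 1] x by (cases "x = 1") auto
      ultimately show "y \<in> {0..S}" using x \<sigma>0 by (simp add: S_def)
    qed
    show "{0..S} \<subseteq> \<sigma> ` {0..1}"
    proof
      fix y assume "y \<in> {0..S}"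
      then obtain x where "0 \<le> x" "x \<le> 1" "\<sigma> x = y"
        using IVT'[of \<sigma> 0 y 1] \<sigma>c \<sigma>0 by (auto simp: S_def)
      then show "y \<in> \<sigma> ` {0..1}" by auto
    qed
  qed
  define \<tau> where "\<tau> = inv_into {0..1} \<sigma>"
  have \<tau>\<sigma>: "\<tau> (\<sigma> x) = x" if "x \<in> {0..1}" for x
    unfolding \<tau>_def using inv_into_f_f[OF inj that] .
  have \<sigma>\<tau>: "\<sigma> (\<tau> s) = s" if "s \<in> {0..S}" for s
    unfolding \<tau>_def using f_inv_into_f[of s \<sigma> "{0..1}"] img that by auto
  have \<tau>in: "\<tau> s \<in> {0..1}" if "s \<in> {0..S}" for s
    unfolding \<tau>_def using inv_into_into[of s \<sigma> "{0..1}"] img that by auto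
  have \<tau>img: "\<tau> ` {0..S} = {0..1}"
  proof
    show "\<tau> ` {0..S} \<subseteq> {0..1}" using \<tau>in by auto
    show "{0..1} \<subseteq> \<tau> ` {0..S}"
    proof
      fix x :: real assume x: "x \<in> {0..1}"
      then have "\<sigma> x \<in> {0..S}" using img by auto
      then show "x \<in> \<tau> ` {0..S}" using \<tau>\<sigma>[OF x] by (metis image_eqI)
    qed
  qed
  have \<tau>c: "continuous_on {0..S} \<tau>"
    using continuous_on_inv[OF \<sigma>c compact_Icc, of \<tau>] \<tau>\<sigma> img by auto
  have \<tau>d: "(\<tau> has_real_derivative inverse (G (\<tau> s))) (at s within {0..S})" if s: "s \<in> {0..S}" for s
  proof (rule inv_deriv_within[where A="{0..1}"])
    show "(\<sigma> has_real_derivative G (\<tau> s)) (at (\<tau> s) within {0..1})" using \<sigma>d[OF \<tau>in[OF s]] .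
    show "G (\<tau> s) \<noteq> 0" using Gp[OF \<tau>in[OF s]] by simp
    show "continuous (at s within {0..S}) \<tau>" using \<tau>c s by (simp add: continuous_on_eq_continuous_within)
  qed (use \<tau>in \<sigma>\<tau> s in auto)
  define \<omega> where "\<omega> s = wf (\<tau> s)" for s
  define q where "q s = P (\<tau> s)" for s
  have qd: "(q has_vector_derivative F (q s) (\<omega> s)) (at s within {0..S})" if s: "s \<in> {0..S}" for s
  proof -
    have "((P \<circ> \<tau>) has_vector_derivative (inverse (G (\<tau> s)) *\<^sub>R (G (\<tau> s) *\<^sub>R f (P (\<tau> s)) (\<kappa> (P (\<tau> s)) + wf (\<tau> s)))))
       (at s within {0..S})"
      by (rule vector_diff_chain_within)
        (use \<tau>d[OF s] Pd[OF \<tau>in[OF s]] \<tau>img in \<open>auto simp: has_real_derivative_iff_has_vector_derivative\<close>)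
    moreover have "G (\<tau> s) \<noteq> 0" using Gp[OF \<tau>in[OF s]] by simp
    ultimately show ?thesis by (simp add: q_def[abs_def] \<omega>_def F_def o_def)
  qed
  have \<omega>c: "continuous_on {0..S} \<omega>"
    unfolding \<omega>_def by (rule continuous_on_compose2[OF wc \<tau>c]) (use \<tau>in in auto)
  define \<Omega> where "\<Omega> s = (if s \<le> S then \<omega> s else \<omega> S)" for s
  have \<Omega>c: "continuous_on {0..} \<Omega>"
    unfolding \<Omega>_def
  proof (rule continuous_on_cases_le)
    show "continuous_on {s \<in> {0..}. s \<le> S} \<omega>"
      by (rule continuous_on_subset[OF \<omega>c]) auto
  qed (auto intro: continuous_intros)
  obtain Y where Y: "ode_solution F (\<lambda>_. \<omega> S) Y" "Y 0 = q S"
    using ex[of "\<lambda>_. \<omega> S" "q S"] by (auto simp: F_def)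
  define Z where "Z s = (if s \<le> S then q s else Y (s - S))" for s
  have Yd: "((\<lambda>s. Y (s - S)) has_vector_derivative F (Y (s - S)) (\<omega> S)) (at s within {S..})"
    if "s \<ge> S" for s
  proof -
    have im: "(\<lambda>s. s - S) ` {S..} = {0..}"
    proof
      show "{0..} \<subseteq> (\<lambda>s. s - S) ` {S..}"
      proof
        fix x :: real assume "x \<in> {0..}"
        then show "x \<in> (\<lambda>s. s - S) ` {S..}" by (intro image_eqI[of _ _ "x + S"]) auto
      qed
    qed auto
    have "((Y \<circ> (\<lambda>s. s - S)) has_vector_derivative (1 *\<^sub>R F (Y (s - S)) (\<omega> S))) (at s within {S..})"
      by (rule vector_diff_chain_within)
        (use Y(1) that im in \<open>auto simp: ode_solution_def intro!: derivative_eq_intros\<close>)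
    then show ?thesis by (simp add: o_def)
  qed
  have Zsol: "ode_solution F \<Omega> Z"
    unfolding ode_solution_def
  proof (intro allI impI)
    fix s :: real assume s: "s \<ge> 0"
    consider "s < S" | "s = S" | "s > S" by linarith
    then show "(Z has_vector_derivative F (Z s) (\<Omega> s)) (at s within {0..})"
    proof cases
      case 1
      have "at s within {0..} = at s within {0..S}"
        by (rule at_within_nhd[where S="{..<S}"]) (use 1 in auto)
      moreover have "(Z has_vector_derivative F (Z s) (\<Omega> s)) (at s within {0..S})"
        by (rule has_vector_derivative_transform[where f=q]) (use qd[of s] s 1 in \<open>auto simp: Z_def \<Omega>_def\<close>)
      ultimately show ?thesis by simp
    next
      case 2
      have "{0..} = {0..S} \<union> {S..}" using S0 by auto
      moreover have "(Z has_vector_derivative F (Z s) (\<Omega> s)) (at s within {0..S})"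
        by (rule has_vector_derivative_transform[where f=q]) (use qd[of s] s 2 in \<open>auto simp: Z_def \<Omega>_def\<close>)
      moreover have "(Z has_vector_derivative F (Z s) (\<Omega> s)) (at s within {S..})"
        by (rule has_vector_derivative_transform[where f="\<lambda>s. Y (s - S)"])
          (use Yd[of s] 2 Y(2) in \<open>auto simp: Z_def \<Omega>_def\<close>)
      ultimately show ?thesis using hvd_Un by metis
    next
      case 3
      have "at s within {0..} = at s within {S..}"
        by (rule at_within_nhd[where S="{S<..}"]) (use 3 S0 in auto)
      moreover have "(Z has_vector_derivative F (Z s) (\<Omega> s)) (at s within {S..})"
        by (rule has_vector_derivative_transform[where f="\<lambda>s. Y (s - S)"])
          (use Yd[of s] 3 Y(2) in \<open>auto simp: Z_def \<Omega>_def\<close>)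
      ultimately show ?thesis by simp
    qed
  qed
  have \<tau>0: "\<tau> 0 = 0" using \<tau>\<sigma>[of 0] \<sigma>0 by simp
  have Z0: "Z 0 = P 0" using S0 \<tau>0 by (simp add: Z_def q_def)
  define W where "W = (SUP x\<in>{0..1}. \<bar>wf x\<bar>)"
  have bddw: "bdd_above ((\<lambda>x. \<bar>wf x\<bar>) ` {0..1})"
  proof -
    have "compact ((\<lambda>x. \<bar>wf x\<bar>) ` {0..1})"
      by (rule compact_continuous_image) (auto intro!: continuous_intros wc)
    then show ?thesis by (simp add: bounded_imp_bdd_above compact_imp_bounded)
  qed
  have wW: "\<bar>wf x\<bar> \<le> W" if "x \<in> {0..1}" for x
    unfolding W_def by (rule cSUP_upper[OF that bddw])
  show ?thesis
  proof
    fix x :: real assume x: "x \<in> {0..1}"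
    have sx: "\<sigma> x \<in> {0..S}" using img x by auto
    have "norm (Z (\<sigma> x)) \<le> \<beta> (norm (Z 0)) (\<sigma> x) + \<gamma> (SUP s\<in>{0..\<sigma> x}. \<bar>\<Omega> s\<bar>)"
      using est[OF \<Omega>c[unfolded F_def] Zsol[unfolded F_def], of "\<sigma> x"] sx by auto
    moreover have "Z (\<sigma> x) = P x" using sx \<tau>\<sigma>[OF x] by (simp add: Z_def q_def)
    moreover have "\<beta> (norm (P 0)) (\<sigma> x) \<le> \<beta> (norm (P 0)) 0"
      using KL sx unfolding class_KL_def monotone_on_def by auto
    moreover have "\<gamma> (SUP s\<in>{0..\<sigma> x}. \<bar>\<Omega> s\<bar>) \<le> \<gamma> W"
    proof -
      have \<Omega>W: "\<bar>\<Omega> s\<bar> \<le> W" if "s \<in> {0..\<sigma> x}" for s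
        using that sx wW[OF \<tau>in, of s] by (auto simp: \<Omega>_def \<omega>_def)
      have b: "bdd_above ((\<lambda>s. \<bar>\<Omega> s\<bar>) ` {0..\<sigma> x})" using \<Omega>W by (intro bdd_aboveI2[of _ _ W]) auto
      have "\<bar>\<Omega> 0\<bar> \<le> (SUP s\<in>{0..\<sigma> x}. \<bar>\<Omega> s\<bar>)"
        by (rule cSUP_upper[OF _ b]) (use sx in auto)
      then have lo: "0 \<le> (SUP s\<in>{0..\<sigma> x}. \<bar>\<Omega> s\<bar>)"
        using abs_ge_zero[of "\<Omega> 0"] by linarith
      have hi: "(SUP s\<in>{0..\<sigma> x}. \<bar>\<Omega> s\<bar>) \<le> W"
        by (rule cSUP_least) (use sx \<Omega>W in auto)
      have sm: "strict_mono_on {0..} \<gamma>" using Kg by (simp add: class_K_def)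
      show ?thesis
      proof (cases "(SUP s\<in>{0..\<sigma> x}. \<bar>\<Omega> s\<bar>) = W")
        case False
        then have "(SUP s\<in>{0..\<sigma> x}. \<bar>\<Omega> s\<bar>) < W" using hi by linarith
        then show ?thesis using strict_mono_onD[OF sm, of "SUP s\<in>{0..\<sigma> x}. \<bar>\<Omega> s\<bar>" W] lo by auto
      qed simp
    qed
    ultimately show "norm (P x) \<le> \<beta> (norm (P 0)) 0 + \<gamma> (SUP x\<in>{0..1}. \<bar>wf x\<bar>)"
      using Z0 by (simp add: W_def)
  qed
qed

lemma Kinf_majorant:
  fixes F :: "'b::euclidean_space \<Rightarrow> 'c::real_normed_vector"
  assumes cF: "continuous_on UNIV F" and F0: "F 0 = 0"
  shows "\<exists>\<rho>. class_K_inf \<rho> \<and> (\<forall>z. norm (F z) \<le> \<rho> (norm z))"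
proof -
  define g where "g r = (SUP z\<in>cball 0 r. norm (F z))" for r :: real
  have bdd: "bdd_above ((\<lambda>z. norm (F z)) ` cball 0 r)" for r :: real
  proof -
    have "compact ((\<lambda>z. norm (F z)) ` cball 0 r)"
      by (rule compact_continuous_image) (auto intro!: continuous_intros continuous_on_subset[OF cF])
    then show ?thesis by (simp add: bounded_imp_bdd_above compact_imp_bounded)
  qed
  have up: "norm (F z) \<le> g r" if "norm z \<le> r" for z r
    unfolding g_def by (rule cSUP_upper[OF _ bdd]) (use that in auto)
  have g0: "g 0 = 0" unfolding g_def using F0 by simp
  have gnn: "g r \<ge> 0" if "r \<ge> 0" for r
    using up[of 0 r] that F0 by simp
  have mono: "g a \<le> g b" if "0 \<le> a" "a \<le> b" for a b
    unfolding g_def using that by (intro cSUP_subset_mono bdd) auto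
  have close: "g b \<le> g a + e" if ab: "0 \<le> a" "a \<le> b" "b \<le> R" and e: "e > 0"
    and uc: "\<And>z z'. z \<in> cball 0 R \<Longrightarrow> z' \<in> cball 0 R \<Longrightarrow> dist z' z < d \<Longrightarrow> dist (F z') (F z) < e"
    and bad: "b - a < d"
    for a b R e d
  proof -
    have "norm (F z) \<le> g a + e" if z: "z \<in> cball 0 b" for z
    proof (cases "norm z \<le> a")
      case True then show ?thesis using up[of z a] e by simp
    next
      case False
      define z' where "z' = (a / norm z) *\<^sub>R z"
      have nz: "norm z > 0" using False ab by linarith
      have nz': "norm z' = a" using nz ab by (simp add: z'_def)
      have "z - z' = (1 - a / norm z) *\<^sub>R z" by (simp add: z'_def algebra_simps)
      then have "norm (z - z') = (1 - a / norm z) * norm z"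
        using nz False by (simp add: abs_of_nonneg)
      also have "\<dots> = norm z - a" using nz by (simp add: field_simps)
      finally have "dist z' z < d" using z bad by (simp add: dist_norm norm_minus_commute)
      then have "dist (F z') (F z) < e"
        by (intro uc) (use z nz' ab in auto)
      then have "norm (F z) \<le> norm (F z') + e"
        by (metis dist_norm norm_triangle_ineq2 less_imp_le diff_le_eq add.commute norm_minus_commute order_trans)
      also have "\<dots> \<le> g a + e" using up[of z' a] nz' by simp
      finally show ?thesis .
    qed
    then show ?thesis unfolding g_def[of b]
      by (intro cSUP_least) (use ab in auto)
  qed
  have contg: "continuous_on {0..} g"
    unfolding continuous_on_iff
  proof (intro ballI allI impI)
    fix r0 e :: real assume r0: "r0 \<in> {0..}" and e: "e > 0"
    define R where "R = r0 + 1"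
    have "uniformly_continuous_on (cball 0 R) F"
      by (rule compact_uniformly_continuous) (auto intro: continuous_on_subset[OF cF])
    then obtain d where d: "d > 0" and
      uc: "\<And>z z'. z \<in> cball 0 R \<Longrightarrow> z' \<in> cball 0 R \<Longrightarrow> dist z' z < d \<Longrightarrow> dist (F z') (F z) < e/2"
      unfolding uniformly_continuous_on_def using e by (meson half_gt_zero)
    show "\<exists>d>0. \<forall>r\<in>{0..}. dist r r0 < d \<longrightarrow> dist (g r) (g r0) < e"
    proof (intro exI[of _ "min d 1"] conjI ballI impI)
      fix r assume r: "r \<in> {0..}" "dist r r0 < min d 1"
      show "dist (g r) (g r0) < e"
      proof (cases "r \<le> r0")
        case True
        have "g r0 \<le> g r + e/2"
          by (rule close[where R=R and d=d]) (use r r0 True uc e in \<open>auto simp: R_def dist_real_def\<close>)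
        moreover have "g r \<le> g r0" using mono r True by auto
        ultimately show ?thesis using e by (simp add: dist_real_def)
      next
        case False
        have "g r \<le> g r0 + e/2"
          by (rule close[where R=R and d=d]) (use r r0 False uc e in \<open>auto simp: R_def dist_real_def\<close>)
        moreover have "g r0 \<le> g r" using mono r0 False by auto
        ultimately show ?thesis using e by (simp add: dist_real_def)
      qed
    qed (use d in auto)
  qed
  define \<rho> where "\<rho> r = g r + r" for r
  have "class_K_inf \<rho>"
    unfolding class_K_inf_def class_K_def
  proof (intro conjI)
    show "continuous_on {0..} \<rho>" unfolding \<rho>_def by (intro continuous_intros contg)
    show "\<rho> 0 = 0" by (simp add: \<rho>_def g0)
    show "strict_mono_on {0..} \<rho>"
    proof (rule strict_mono_onI)
      fix r s :: real assume "r \<in> {0..}" "s \<in> {0..}" "r < s"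
      then show "\<rho> r < \<rho> s" using mono[of r s] by (simp add: \<rho>_def)
    qed
    show "filterlim \<rho> at_top at_top"
    proof (rule filterlim_at_top_mono[OF filterlim_ident])
      show "\<forall>\<^sub>F x in at_top. x \<le> \<rho> x"
        using eventually_ge_at_top[of "0::real"] by eventually_elim (use gnn in \<open>auto simp: \<rho>_def\<close>)
    qed
  qed
  moreover have "norm (F z) \<le> \<rho> (norm z)" for z
    unfolding \<rho>_def using up[of z "norm z"] norm_ge_zero[of z] by linarith
  ultimately show ?thesis by blast
qed

lemma K_mono: "class_K \<alpha> \<Longrightarrow> 0 \<le> a \<Longrightarrow> a \<le> b \<Longrightarrow> \<alpha> a \<le> \<alpha> b"
  unfolding class_K_def
  by (metis atLeast_iff order.trans order_le_less strict_mono_onD)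

lemma K_nonneg: "class_K \<alpha> \<Longrightarrow> 0 \<le> a \<Longrightarrow> 0 \<le> \<alpha> a"
  using K_mono[of \<alpha> 0 a] by (simp add: class_K_def)

theorem lemma4:
  fixes f :: "'a::euclidean_space \<Rightarrow> real \<Rightarrow> 'a"
    and f' :: "'a \<times> real \<Rightarrow> ('a \<times> real) \<Rightarrow>\<^sub>L 'a"
    and v v' v'' :: "real \<Rightarrow> real"
    and \<kappa> :: "'a \<Rightarrow> real"
    and \<kappa>' :: "'a \<Rightarrow> 'a \<Rightarrow>\<^sub>L real"
    and \<kappa>'' :: "'a \<Rightarrow> 'a \<Rightarrow>\<^sub>L ('a \<Rightarrow>\<^sub>L real)"
    and v_low M :: real
  assumes f_C1: "\<And>z. ((\<lambda>(X,w). f X w) has_derivative blinfun_apply (f' z)) (at z)"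
    and f'_cont: "continuous_on UNIV f'"
    and f_zero: "f 0 0 = 0"
    and v_deriv: "\<And>s. (v has_real_derivative v' s) (at s)"
    and v'_deriv: "\<And>s. (v' has_real_derivative v'' s) (at s)"
    and v''_cont: "continuous_on UNIV v''"
    and v_low_pos: "v_low > 0"
    and v_lower: "\<And>s. v s \<ge> v_low"
    and A2: "strongly_forward_complete f"
    and \<kappa>_deriv: "\<And>X. (\<kappa> has_derivative blinfun_apply (\<kappa>' X)) (at X)"
    and \<kappa>'_deriv: "\<And>X. (\<kappa>' has_derivative blinfun_apply (\<kappa>'' X)) (at X)"
    and \<kappa>''_cont: "continuous_on UNIV \<kappa>''"
    and \<kappa>_zero: "\<kappa> 0 = 0"
    and A3: "ISS (\<lambda>X \<omega>. f X (\<kappa> X + \<omega>))"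
    and M_pos: "M > 0"
  shows "\<exists>\<rho>2. class_K_inf \<rho>2 \<and>
    (\<forall>X u ux ut p. closed_loop_solution f v v' \<kappa> X u ux ut p \<longrightarrow>
       (\<forall>x\<in>{0..1}. \<forall>t\<ge>0. - M < v' (u x t) * ux x t / v (u x t) \<and>
                             v' (u x t) * ux x t / v (u x t) < 1) \<longrightarrow>
       (\<forall>t\<ge>0.
          (SUP x\<in>{0..1}. norm (p x t))
          + (SUP x\<in>{0..1}. norm (vector_derivative (\<lambda>y. p y t) (at x within {0..1})))
          \<le> \<rho>2 (norm (X t) + (SUP x\<in>{0..1}. \<bar>u x t - \<kappa> (p x t)\<bar>))))"
proof -
  have fc: "continuous_on UNIV (\<lambda>z::'a\<times>real. f (fst z) (snd z))"
  proof -
    have "\<And>z. continuous (at z) (\<lambda>(X,w). f X w)" using f_C1 has_derivative_continuous by blast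
    then show ?thesis by (simp add: continuous_on_eq_continuous_at case_prod_beta')
  qed
  obtain \<rho>f where \<rho>f: "class_K_inf \<rho>f" "\<And>z. norm (f (fst z) (snd z)) \<le> \<rho>f (norm z)"
    using Kinf_majorant[OF fc] f_zero by auto
  have kc: "continuous_on UNIV \<kappa>"
    by (intro continuous_at_imp_continuous_on ballI has_derivative_continuous[OF \<kappa>_deriv])
  obtain \<rho>k where \<rho>k: "class_K_inf \<rho>k" "\<And>X. \<bar>\<kappa> X\<bar> \<le> \<rho>k (norm X)"
    using Kinf_majorant[OF kc] \<kappa>_zero by auto
  obtain \<beta> \<gamma> where KL: "class_KL \<beta>" and Kg: "class_K \<gamma>"
    and ex: "\<And>x0 \<omega>. continuous_on {0..} \<omega> \<Longrightarrow> (\<exists>Y. ode_solution (\<lambda>X \<omega>. f X (\<kappa> X + \<omega>)) \<omega> Y \<and> Y 0 = x0)"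
    and est: "\<And>\<omega> Y t. continuous_on {0..} \<omega> \<Longrightarrow> ode_solution (\<lambda>X \<omega>. f X (\<kappa> X + \<omega>)) \<omega> Y \<Longrightarrow> t \<ge> 0 \<Longrightarrow>
          norm (Y t) \<le> \<beta> (norm (Y 0)) t + \<gamma> (SUP s\<in>{0..t}. \<bar>\<omega> s\<bar>)"
    using A3 unfolding ISS_def by blast
  have Kf: "class_K \<rho>f" and Kk: "class_K \<rho>k" using \<rho>f \<rho>k by (auto simp: class_K_inf_def)
  have Kb: "class_K (\<lambda>s. \<beta> s 0)" using KL by (simp add: class_KL_def)
  define C where "C = (1 + M) / v_low"
  have C0: "C \<ge> 0" using M_pos v_low_pos by (simp add: C_def)
  define P0 where "P0 r = \<beta> r 0 + \<gamma> r" for r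
  define \<rho>2 where "\<rho>2 r = P0 r + C * \<rho>f (P0 r + \<rho>k (P0 r) + r) + r" for r
  have P0nn: "P0 r \<ge> 0" if "r \<ge> 0" for r
    using K_nonneg[OF Kb that] K_nonneg[OF Kg that] by (simp add: P0_def)
  have P0mono: "P0 a \<le> P0 b" if "0 \<le> a" "a \<le> b" for a b
    using K_mono[OF Kb that] K_mono[OF Kg that] by (simp add: P0_def)
  have inner_mono: "P0 a + \<rho>k (P0 a) + a \<le> P0 b + \<rho>k (P0 b) + b" if "0 \<le> a" "a \<le> b" for a b
    using P0mono[OF that] K_mono[OF Kk P0nn[OF that(1)] P0mono[OF that]] that by linarith
  have inner_nn: "0 \<le> P0 a + \<rho>k (P0 a) + a" if "0 \<le> a" for a
    using P0nn[OF that] K_nonneg[OF Kk P0nn[OF that]] that by linarith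
  have \<rho>2K: "class_K_inf \<rho>2"
    unfolding class_K_inf_def class_K_def
  proof (intro conjI)
    have cP0: "continuous_on {0..} P0"
      using Kb Kg unfolding P0_def class_K_def by (intro continuous_intros) auto
    have ck: "continuous_on {0..} (\<lambda>r. \<rho>k (P0 r))"
      by (rule continuous_on_compose2[OF _ cP0, of "{0..}"]) (use Kk P0nn in \<open>auto simp: class_K_def\<close>)
    have cf: "continuous_on {0..} (\<lambda>r. \<rho>f (P0 r + \<rho>k (P0 r) + r))"
      by (rule continuous_on_compose2[of "{0..}" \<rho>f])
        (use Kf inner_nn in \<open>auto simp: class_K_def intro!: continuous_intros cP0 ck\<close>)
    show "continuous_on {0..} \<rho>2" unfolding \<rho>2_def by (intro continuous_intros cP0 cf)
    show "\<rho>2 0 = 0" using Kb Kg Kk Kf by (simp add: \<rho>2_def P0_def class_K_def)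
    show "strict_mono_on {0..} \<rho>2"
    proof (rule strict_mono_onI)
      fix a b :: real assume ab: "a \<in> {0..}" "b \<in> {0..}" "a < b"
      have "\<rho>f (P0 a + \<rho>k (P0 a) + a) \<le> \<rho>f (P0 b + \<rho>k (P0 b) + b)"
        using K_mono[OF Kf inner_nn inner_mono] ab by auto
      then have "C * \<rho>f (P0 a + \<rho>k (P0 a) + a) \<le> C * \<rho>f (P0 b + \<rho>k (P0 b) + b)"
        using C0 by (simp add: mult_left_mono)
      then show "\<rho>2 a < \<rho>2 b" using P0mono[of a b] ab by (simp add: \<rho>2_def)
    qed
    show "filterlim \<rho>2 at_top at_top"
    proof (rule filterlim_at_top_mono[OF filterlim_ident])
      show "\<forall>\<^sub>F x in at_top. x \<le> \<rho>2 x"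
        using eventually_ge_at_top[of "0::real"]
      proof eventually_elim
        case (elim x)
        have "0 \<le> \<rho>f (P0 x + \<rho>k (P0 x) + x)" using K_nonneg[OF Kf inner_nn[OF elim]] .
        then have "0 \<le> C * \<rho>f (P0 x + \<rho>k (P0 x) + x)" using C0 by simp
        then show ?case using P0nn[OF elim] by (simp add: \<rho>2_def)
      qed
    qed
  qed
  have vc: "continuous_on UNIV v"
    using v_deriv by (meson DERIV_isCont continuous_at_imp_continuous_on)
  have v'c: "continuous_on UNIV v'"
    using v'_deriv by (meson DERIV_isCont continuous_at_imp_continuous_on)
  have main: "(SUP x\<in>{0..1}. norm (p x t))
          + (SUP x\<in>{0..1}. norm (vector_derivative (\<lambda>y. p y t) (at x within {0..1})))
          \<le> \<rho>2 (norm (X t) + (SUP x\<in>{0..1}. \<bar>u x t - \<kappa> (p x t)\<bar>))"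
    if sol: "closed_loop_solution f v v' \<kappa> X u ux ut p"
    and bnd: "\<forall>x\<in>{0..1}. \<forall>t\<ge>0. - M < v' (u x t) * ux x t / v (u x t) \<and>
                             v' (u x t) * ux x t / v (u x t) < 1"
    and t: "t \<ge> 0"
    for X u ux ut p t
  proof -
    note sd = sol[unfolded closed_loop_solution_def]
    define box where "box = {0..1::real} \<times> ({0..} :: real set)"
    define U where "U y = u y t" for y
    define Ux where "Ux y = ux y t" for y
    define P where "P y = p y t" for y
    define G where "G y = Gamma v v' (U y) (Ux y) y" for y
    define g where "g y = G y *\<^sub>R f (P y) (U y)" for y
    define wf where "wf y = U y - \<kappa> (P y)" for y
    have emb: "(\<lambda>y. (y, t)) ` {0..1} \<subseteq> box" using t by (auto simp: box_def)
    have cemb: "continuous_on {0..1} (\<lambda>y::real. (y, t))" by (intro continuous_intros)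
    have uc: "continuous_on box (\<lambda>(y,s). u y s)"
      unfolding continuous_on_eq_continuous_within box_def
      using sd has_derivative_continuous by fastforce
    have Uc: "continuous_on {0..1} U"
      using continuous_on_compose2[OF uc cemb emb] by (simp add: U_def)
    have Uxc: "continuous_on {0..1} Ux"
      using continuous_on_compose2[OF sd[THEN conjunct2, THEN conjunct1, folded box_def] cemb emb]
      by (simp add: Ux_def)
    have Pc: "continuous_on {0..1} P" using sd t by (simp add: P_def[abs_def])
    have vUc: "continuous_on {0..1} (\<lambda>y. v (U y))" by (rule continuous_on_compose2[OF vc Uc]) auto
    have v'Uc: "continuous_on {0..1} (\<lambda>y. v' (U y))" by (rule continuous_on_compose2[OF v'c Uc]) auto
    have vpos: "v (U y) > 0" for y using v_lower[of "U y"] v_low_pos by linarith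
    have Gc: "continuous_on {0..1} G"
      unfolding G_def[abs_def] Gamma_def
      by (intro continuous_intros vUc v'Uc Uxc) (use vpos in \<open>auto simp: less_imp_neq[symmetric]\<close>)
    have fPUc: "continuous_on {0..1} (\<lambda>y. f (P y) (U y))"
      using continuous_on_compose2[OF fc, of "{0..1}" "\<lambda>y. (P y, U y)"] Pc Uc
      by (auto intro!: continuous_intros)
    have gc: "continuous_on {0..1} g" unfolding g_def[abs_def] by (intro continuous_intros Gc fPUc)
    have kPc: "continuous_on {0..1} (\<lambda>y. \<kappa> (P y))" by (rule continuous_on_compose2[OF kc Pc]) auto
    have wfc: "continuous_on {0..1} wf" unfolding wf_def[abs_def] by (intro continuous_intros Uc kPc)
    have Gb: "0 < G y \<and> G y \<le> C" if y: "y \<in> {0..1}" for y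
    proof -
      define k where "k = v' (U y) * Ux y / v (U y)"
      have k: "- M < k" "k < 1" using bnd y t by (auto simp: k_def U_def Ux_def)
      have vy: "v (U y) > 0" by (rule vpos)
      have Geq: "G y = (1 - y * k) / v (U y)"
        using vy by (simp add: G_def Gamma_def k_def field_simps power2_eq_square)
      have y01: "0 \<le> y" "y \<le> 1" using y by auto
      have l: "0 < 1 - y * k"
      proof (cases "k \<le> 0")
        case True then show ?thesis using y01 mult_nonneg_nonpos[of y k] by linarith
      next
        case False then have "y * k \<le> 1 * k" using y01 by (intro mult_right_mono) auto
        then show ?thesis using k by simp
      qed
      have h: "1 - y * k \<le> 1 + M"
      proof (cases "k \<ge> 0")
        case True then show ?thesis using y01 M_pos mult_nonneg_nonneg[of y k] by linarith
      next
        case False then have "1 * k \<le> y * k" using y01 by (intro mult_right_mono_neg) auto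
        then show ?thesis using k by simp
      qed
      have "G y \<le> (1 + M) / v (U y)" using Geq h vy by (simp add: divide_right_mono)
      also have "\<dots> \<le> (1 + M) / v_low"
        using v_lower[of "U y"] v_low_pos M_pos by (intro divide_left_mono) auto
      finally show ?thesis using Geq l vy by (simp add: C_def)
    qed
    have Peq: "P x = X t + integral {0..x} g" if "x \<in> {0..1}" for x
      using sd that t by (simp add: P_def U_def Ux_def G_def[abs_def] g_def[abs_def])
    have Pd: "(P has_vector_derivative g x) (at x within {0..1})" if x: "x \<in> {0..1}" for x
    proof -
      have ih: "((\<lambda>x. X t + integral {0..x} g) has_vector_derivative g x) (at x within {0..1})"
        using integral_has_vector_derivative[OF gc x] by (auto intro!: derivative_eq_intros)
      show ?thesis by (rule has_vector_derivative_transform[OF x _ ih]) (use Peq in auto)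
    qed
    have P0X: "P 0 = X t" using Peq[of 0] by simp
    have slice: "\<forall>x\<in>{0..1}. norm (P x) \<le> \<beta> (norm (P 0)) 0 + \<gamma> (SUP x\<in>{0..1}. \<bar>wf x\<bar>)"
    proof (rule slice_ISS[OF Gc _ wfc _ ex est KL Kg])
      show "\<And>x. x \<in> {0..1} \<Longrightarrow> 0 < G x" using Gb by blast
      show "\<And>x. x \<in> {0..1} \<Longrightarrow> (P has_vector_derivative G x *\<^sub>R f (P x) (\<kappa> (P x) + wf x)) (at x within {0..1})"
        using Pd by (simp add: g_def wf_def)
    qed auto
    define W where "W = (SUP x\<in>{0..1}. \<bar>wf x\<bar>)"
    have bddw: "bdd_above ((\<lambda>x. \<bar>wf x\<bar>) ` {0..1})"
    proof -
      have "compact ((\<lambda>x. \<bar>wf x\<bar>) ` {0..1})"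
        by (rule compact_continuous_image) (auto intro!: continuous_intros wfc)
      then show ?thesis by (simp add: bounded_imp_bdd_above compact_imp_bounded)
    qed
    have wW: "\<bar>wf x\<bar> \<le> W" if "x \<in> {0..1}" for x
      unfolding W_def by (rule cSUP_upper[OF that bddw])
    have W0: "W \<ge> 0" using wW[of 0] by simp
    define r where "r = norm (X t) + W"
    have r0: "r \<ge> 0" using W0 by (simp add: r_def)
    have Pb: "norm (P x) \<le> P0 r" if x: "x \<in> {0..1}" for x
    proof -
      have "norm (P x) \<le> \<beta> (norm (X t)) 0 + \<gamma> W" using slice x P0X by (simp add: W_def)
      also have "\<dots> \<le> P0 r"
        using K_mono[OF Kb, of "norm (X t)" r] K_mono[OF Kg W0, of r] W0 by (simp add: P0_def r_def)
      finally show ?thesis .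
    qed
    have gb: "norm (g x) \<le> C * \<rho>f (P0 r + \<rho>k (P0 r) + r)" if x: "x \<in> {0..1}" for x
    proof -
      have "\<bar>U x\<bar> \<le> \<bar>\<kappa> (P x)\<bar> + \<bar>wf x\<bar>" by (simp add: wf_def)
      also have "\<dots> \<le> \<rho>k (P0 r) + r"
        using norm_ge_zero[of "X t"] \<rho>k(2)[of "P x"] K_mono[OF Kk norm_ge_zero Pb[OF x]] wW[OF x]
        unfolding r_def by linarith 
      finally have Ub: "\<bar>U x\<bar> \<le> \<rho>k (P0 r) + r" .
      have "norm (P x, U x) \<le> norm (P x) + norm (U x)" by (rule norm_Pair_le)
      also have "\<dots> \<le> P0 r + \<rho>k (P0 r) + r" using Pb[OF x] Ub by simp
      finally have nb: "norm (P x, U x) \<le> P0 r + \<rho>k (P0 r) + r" .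
      have "norm (f (P x) (U x)) \<le> \<rho>f (norm (P x, U x))" using \<rho>f(2)[of "(P x, U x)"] by simp
      also have "\<dots> \<le> \<rho>f (P0 r + \<rho>k (P0 r) + r)" by (rule K_mono[OF Kf norm_ge_zero nb])
      finally have fb: "norm (f (P x) (U x)) \<le> \<rho>f (P0 r + \<rho>k (P0 r) + r)" .
      have "norm (g x) = G x * norm (f (P x) (U x))" using Gb[OF x] by (simp add: g_def)
      also have "\<dots> \<le> C * \<rho>f (P0 r + \<rho>k (P0 r) + r)"
        using Gb[OF x] fb by (intro mult_mono) auto
      finally show ?thesis .
    qed
    have vd: "vector_derivative (\<lambda>y. p y t) (at x within {0..1}) = g x" if x: "x \<in> {0..1}" for x
      using vector_derivative_within_cbox[of 0 1 x P "g x"] Pd[OF x] x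
      by (simp add: P_def[abs_def] cbox_interval)
    have s1: "(SUP x\<in>{0..1}. norm (p x t)) \<le> P0 r"
      by (rule cSUP_least) (use Pb in \<open>auto simp: P_def\<close>)
    have s2: "(SUP x\<in>{0..1}. norm (vector_derivative (\<lambda>y. p y t) (at x within {0..1})))
        \<le> C * \<rho>f (P0 r + \<rho>k (P0 r) + r)"
      by (rule cSUP_least) (use gb vd in auto)
    have "(SUP x\<in>{0..1}. \<bar>u x t - \<kappa> (p x t)\<bar>) = W" by (simp add: W_def wf_def U_def P_def)
    then show ?thesis using s1 s2 r0 by (simp add: \<rho>2_def r_def)
  qed
  show ?thesis using \<rho>2K main by blast
qed

end
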